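(* Let $m\in\mathbb{N}$, let $\alpha,\beta,\mu\in\mathbb{C}$ with $\alpha,\frac{1+\alpha+\beta}{2}\notin\mathbb{Z}_0^-$, $\Re(\beta)>0$ and $\Re(\mu)>0$. Then \[ \int_0^\infty t^{\beta-1}e^{-\mu t}\,{}_2F_2\left[\begin{array}{r} -m,\ \alpha;\\ -2m,\ \tfrac{1+\alpha+\beta}{2};\end{array}\mu t\right]_m dt=\frac{\Gamma(\beta)}{\mu^{\beta}}\frac{\left(\frac{1+\alpha}{2}\right)_m\left(\frac{1+\beta}{2}\right)_m}{\left(\frac{1}{2}\right)_m\left(\frac{1+\alpha+\beta}{2}\right)_m}. \]
   Context: $\mathbb{N}=\{1,2,3,\dots\}$, $\mathbb{Z}_0^-=\{0,-1,-2,\dots\}$. For $a\in\mathbb{C}$ and $n\in\mathbb{N}_0$, $(a)_0=1$ and $(a)_n=a(a+1)\cdots(a+n-1)$. For $N\in\mathbb{N}_0$, the truncated series is ${}_2F_2\left[\begin{array}{r} a_1,a_2;\\ b_1,b_2;\end{array}z\right]_N=\sum_{n=0}^{N}\frac{(a_1)_n(a_2)_n}{(b_1)_n(b_2)_n}\frac{z^n}{n!}$ (first $N+1$ terms). The left side is the Mellin transform $\int_0^\infty t^{s-1}f(t)\,dt$ at $s=\beta$; $\mu^{\beta}$ denotes the principal power. *)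

theory Defs
  imports "HOL-Analysis.Analysis"
begin

definition hyp2F2_trunc ::
  "complex \<Rightarrow> complex \<Rightarrow> complex \<Rightarrow> complex \<Rightarrow> nat \<Rightarrow> complex \<Rightarrow> complex" where
  "hyp2F2_trunc a1 a2 b1 b2 N z =
     (\<Sum>n=0..N. (pochhammer a1 n * pochhammer a2 n) / (pochhammer b1 n * pochhammer b2 n)
                 * z ^ n / of_nat (fact n))"

end

theory Submission
  imports Defs "HOL-Complex_Analysis.Complex_Analysis"
begin




lemma poly_id:
  fixes a b c M N :: complex
  assumes "1 + a + b = 2 * c"
  shows "(2*M+2-N)*(2*M+1-N)*(M+c) - (1+a+2*M)*(1+b+2*M)*(M+1-N)
       = -(a+N)*(b+N)*(M+1-N) + (2*M+1-N)*N*(N+c-1)"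
proof -
  have b: "b = 2*c - 1 - a" using assms by (simp add: algebra_simps)
  show ?thesis unfolding b by (simp add: algebra_simps)
qed

lemma ab1: "(X::complex) \<noteq> 0 \<Longrightarrow> Z \<noteq> 0 \<Longrightarrow> W \<noteq> 0 \<Longrightarrow> X*Y/(2*Z*W) * ((-Z)/(-X)) = Y/(2*W)"
  by (simp add: field_simps)

lemma ab2: "(Q::complex) \<noteq> 0 \<Longrightarrow> R \<noteq> 0 \<Longrightarrow> Y \<noteq> 0 \<Longrightarrow> W \<noteq> 0 \<Longrightarrow> V \<noteq> 0 \<Longrightarrow>
    Y/(2*W) * (P/(Q*R)) * (R*Q) / (V*Y) = P/(2*W*V)"
  by (simp add: field_simps)

lemma step_i:
  fixes a b c M N :: complex
  assumes h1: "M + 1 - N \<noteq> 0" and h2: "2*M+1 \<noteq> 0" and h3: "N - 2*M - 2 \<noteq> 0"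
    and h4: "c + N \<noteq> 0" and h5: "N + 1 \<noteq> 0" and h6: "M + c \<noteq> 0"
    and h7: "2*M+1-N \<noteq> 0" and h8: "2*M+2-N \<noteq> 0"
  shows "(2*M+2-N)*(2*M+1-N)/(2*(M+1-N)*(2*M+1)) * ((N-M-1)/(N-2*M-2)) * ((a+N)*(b+N)/((c+N)*(N+1)))
           * ((N+1)*(N+1+c-1)) / ((M+c)*(2*M+2-(N+1)))
       = (a+N)*(b+N)/(2*(2*M+1)*(M+c))"
proof -
  have n1: "N-M-1 = -(M+1-N)" and n2: "N-2*M-2 = -(2*M+2-N)" by (simp_all add: algebra_simps)
  have e1: "(2*M+2-N)*(2*M+1-N)/(2*(M+1-N)*(2*M+1)) * ((N-M-1)/(N-2*M-2)) = (2*M+1-N)/(2*(2*M+1))"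
    unfolding n1 n2 by (rule ab1[OF h8 h1 h2])
  have e2: "N+1+c-1 = c+N" "2*M+2-(N+1) = 2*M+1-N" by (simp_all add: algebra_simps)
  show ?thesis unfolding e1 e2 by (rule ab2[OF h4 h5 h7 h2 h6])
qed



lemma half_aux: "((x::complex)/2)*(y/2)/((z/2)*w) = x*y/(2*z*w)"
  by (cases "z = 0"; cases "w = 0") (simp_all add: field_simps)

lemma r_form:
  fixes a b c M :: complex
  shows "((1+a)/2+M)*((1+b)/2+M)/((1/2+M)*(c+M)) = (1+a+2*M)*(1+b+2*M)/(2*(2*M+1)*(M+c))"
proof -
  have "(1+a)/2+M = (1+a+2*M)/2" "(1+b)/2+M = (1+b+2*M)/2" "1/2+M = (2*M+1)/2" "c+M = M+c"
    by (simp_all add: field_simps)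
  thus ?thesis by (simp only: half_aux)
qed

lemma step_iii:
  fixes a b c M N :: complex
  assumes hc: "1 + a + b = 2 * c"
  assumes h1: "M + 1 - N \<noteq> 0" and h2: "2*M+1 \<noteq> 0" and h6: "M + c \<noteq> 0"
  shows "(2*M+2-N)*(2*M+1-N)/(2*(M+1-N)*(2*M+1)) - (1+a+2*M)*(1+b+2*M)/(2*(2*M+1)*(M+c))
       = -((a+N)*(b+N)/(2*(2*M+1)*(M+c))) + (2*M+1-N)*(N*(N+c-1))/(2*(M+1-N)*(2*M+1)*(M+c))"
proof -
  have b: "b = 2*c - 1 - a" using hc by (simp add: algebra_simps)
  have d1: "2*(M+1-N)*(2*M+1) \<noteq> 0" and d2: "2*(2*M+1)*(M+c) \<noteq> 0" and d3: "2*(M+1-N)*(2*M+1)*(M+c) \<noteq> 0"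
    using h1 h2 h6 by (metis mult_eq_0_iff zero_neq_numeral)+
  show ?thesis
    unfolding diff_frac_eq[OF d1 d2] minus_divide_left add_frac_eq[OF d2 d3] frac_eq_eq[OF no_zero_divisors[OF d1 d2] no_zero_divisors[OF d2 d3]]
    unfolding b by (simp add: algebra_simps)
qed



lemma combine:
  fixes K \<rho> t1 t2 X3 Y3 T4 Y4 r A B :: complex
  assumes i: "\<rho>*t1*t2*X3/Y3 = A" and ii: "\<rho>*T4/Y4 = B" and iii: "\<rho> - r = -A + B"
  shows "K*\<rho> - r*K = -(K*\<rho>*t1*t2)*X3/Y3 - (-(K*\<rho>)*T4/Y4)"
proof -
  have 1: "-(K*\<rho>*t1*t2)*X3/Y3 = -(K*A)" unfolding i[symmetric] by (simp add: mult.assoc)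
  have 2: "-(K*\<rho>)*T4/Y4 = -(K*B)" unfolding ii[symmetric] by (simp add: mult.assoc)
  have 3: "K*\<rho> - r*K = K*(\<rho> - r)" by (simp add: algebra_simps)
  show ?thesis unfolding 1 2 3 iii by (simp add: algebra_simps)
qed

lemma step_ii:
  fixes c M N T :: complex
  assumes h8: "2*M+2-N \<noteq> 0"
  shows "(2*M+2-N)*(2*M+1-N)/(2*(M+1-N)*(2*M+1)) * T / ((M+c)*(2*M+2-N))
       = (2*M+1-N)*T/(2*(M+1-N)*(2*M+1)*(M+c))"
proof -
  have "(2*M+2-N)*(2*M+1-N)/(2*(M+1-N)*(2*M+1)) * T / ((M+c)*(2*M+2-N))
      = (2*M+2-N)*((2*M+1-N)*T)/((2*M+2-N)*(2*(M+1-N)*(2*M+1)*(M+c)))"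
    by (simp add: mult_ac)
  also have "\<dots> = (2*M+1-N)*T/(2*(M+1-N)*(2*M+1)*(M+c))"
    using h8 by (rule mult_divide_mult_cancel_left)
  finally show ?thesis .
qed

lemma wz_rat:
  fixes a b N M K :: complex
  defines "c \<equiv> (1 + a + b) / 2"
  defines "\<rho> \<equiv> (2*M+2-N)*(2*M+1-N)/(2*(M+1-N)*(2*M+1))"
  assumes h1: "M + 1 - N \<noteq> 0" and h2: "2*M+1 \<noteq> 0" and h3: "N - 2*M - 2 \<noteq> 0"
    and h4: "c + N \<noteq> 0" and h5: "N + 1 \<noteq> 0" and h6: "M + c \<noteq> 0"
    and h7: "2*M+1-N \<noteq> 0" and h8: "2*M+2-N \<noteq> 0"
  shows "K*\<rho> - ((1+a)/2+M)*((1+b)/2+M)/((1/2+M)*(c+M)) * K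
       = - (K*\<rho> * ((N-M-1)/(N-2*M-2)) * ((a+N)*(b+N)/((c+N)*(N+1))))
           * ((N+1)*(N+1+c-1)) / ((M+c)*(2*M+2-(N+1)))
         - (- (K*\<rho>) * (N*(N+c-1)) / ((M+c)*(2*M+2-N)))"
proof (rule combine)
  have hc: "1 + a + b = 2 * c" unfolding c_def by simp
  show "\<rho> * ((N-M-1)/(N-2*M-2)) * ((a+N)*(b+N)/((c+N)*(N+1))) * ((N+1)*(N+1+c-1)) / ((M+c)*(2*M+2-(N+1)))
      = (a+N)*(b+N)/(2*(2*M+1)*(M+c))"
    unfolding \<rho>_def by (rule step_i[OF h1 h2 h3 h4 h5 h6 h7 h8])
  show "\<rho> * (N*(N+c-1)) / ((M+c)*(2*M+2-N)) = (2*M+1-N)*(N*(N+c-1))/(2*(M+1-N)*(2*M+1)*(M+c))"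
    unfolding \<rho>_def by (rule step_ii[OF h8])
  show "\<rho> - ((1+a)/2+M)*((1+b)/2+M)/((1/2+M)*(c+M))
      = -((a+N)*(b+N)/(2*(2*M+1)*(M+c))) + (2*M+1-N)*(N*(N+c-1))/(2*(M+1-N)*(2*M+1)*(M+c))"
    unfolding \<rho>_def r_form by (rule step_iii[OF hc h1 h2 h6])
qed




definition AA :: "nat \<Rightarrow> nat \<Rightarrow> complex" where
  "AA m n = pochhammer (- of_nat m) n / pochhammer (- 2 * of_nat m) n"

definition XX :: "complex \<Rightarrow> complex \<Rightarrow> nat \<Rightarrow> complex" where
  "XX a b n = pochhammer a n * pochhammer b n / (pochhammer ((1+a+b)/2) n * of_nat (fact n))"

lemma AA_Suc_n: "AA (Suc m) (Suc n) = AA (Suc m) n * ((of_nat n - of_nat m - 1) / (of_nat n - 2 * of_nat m - 2))"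
  unfolding AA_def pochhammer_rec'
  by (simp add: algebra_simps)

lemma XX_Suc: "XX a b (Suc n) = XX a b n * ((a + of_nat n) * (b + of_nat n) / (((1+a+b)/2 + of_nat n) * (of_nat n + 1)))"
  unfolding XX_def pochhammer_rec'
  by (simp add: algebra_simps)

lemma rat_aux:
  fixes M N :: complex
  assumes "M + 1 \<noteq> 0"
  shows "(- (M + 1) * ((N - 2 * M - 2) * (N - 2 * M - 1))) / ((N - M - 1) * ((- 2 * M - 2) * (- 2 * M - 1)))
      = (2*M+2-N)*(2*M+1-N)/(2*(M+1-N)*(2*M+1))"
proof -
  have "(- (M + 1) * ((N - 2 * M - 2) * (N - 2 * M - 1))) / ((N - M - 1) * ((- 2 * M - 2) * (- 2 * M - 1)))
      = ((-(M+1)) * ((2*M+2-N)*(2*M+1-N))) / ((-(M+1)) * (2*(M+1-N)*(2*M+1)))"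
    by (rule arg_cong2[where f="(/)"]) (simp_all add: algebra_simps)
  also have "\<dots> = (2*M+2-N)*(2*M+1-N)/(2*(M+1-N)*(2*M+1))"
    using assms by (intro mult_divide_mult_cancel_left) (metis add.inverse_neutral minus_add_distrib neg_eq_iff_add_eq_0 add.commute)
  finally show ?thesis .
qed

lemma AA_Suc_m:
  assumes "n \<le> m"
  shows "AA (Suc m) n = AA m n * ((2* of_nat m+2-of_nat n)*(2* of_nat m+1-of_nat n)/(2*(of_nat m+1-of_nat n)*(2* of_nat m+1)))"
proof -
  define P where "P = pochhammer (- of_nat (Suc m) :: complex) n"
  define Q where "Q = pochhammer (- of_nat m :: complex) n"
  define U where "U = pochhammer (- 2 * of_nat (Suc m) :: complex) n"
  define V where "V = pochhammer (- 2 * of_nat m :: complex) n"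
  have e1: "P * (of_nat n - of_nat m - 1) = - (of_nat m + 1) * Q"
  proof -
    have "pochhammer (- of_nat (Suc m) :: complex) (Suc n) = P * (- of_nat (Suc m) + of_nat n)"
      unfolding P_def by (simp add: pochhammer_rec' mult.commute)
    moreover have "pochhammer (- of_nat (Suc m) :: complex) (Suc n) = - of_nat (Suc m) * Q"
      unfolding Q_def pochhammer_rec by (simp add: algebra_simps)
    ultimately have "P * (- of_nat (Suc m) + of_nat n) = - of_nat (Suc m) * Q" by simp
    thus ?thesis by (simp add: algebra_simps)
  qed
  have e2: "U * ((of_nat n - 2* of_nat m - 2) * (of_nat n - 2* of_nat m - 1)) = (- 2* of_nat m - 2) * (- 2* of_nat m - 1) * V"
  proof -
    have "pochhammer (- 2 * of_nat (Suc m) :: complex) (Suc (Suc n)) = U * (- 2 * of_nat (Suc m) + of_nat n) * (- 2 * of_nat (Suc m) + of_nat (Suc n))"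
      unfolding U_def pochhammer_rec' by simp
    moreover have "pochhammer (- 2 * of_nat (Suc m) :: complex) (Suc (Suc n)) = (- 2 * of_nat (Suc m)) * (- 2 * of_nat (Suc m) + 1) * V"
      unfolding V_def pochhammer_rec by (simp add: algebra_simps)
    ultimately have "U * (- 2 * of_nat (Suc m) + of_nat n) * (- 2 * of_nat (Suc m) + of_nat (Suc n)) = (- 2 * of_nat (Suc m)) * (- 2 * of_nat (Suc m) + 1) * V" by simp
    thus ?thesis by (simp add: algebra_simps)
  qed
  have n1: "(of_nat n - of_nat m - 1 :: complex) \<noteq> 0"
  proof
    assume "(of_nat n - of_nat m - 1 :: complex) = 0"
    hence "(of_nat n :: complex) = of_nat (m + 1)" by (simp add: algebra_simps)
    hence "n = m + 1" using of_nat_eq_iff by blast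
    with assms show False by simp
  qed
  have n2: "(of_nat n - 2* of_nat m - 2 :: complex) \<noteq> 0"
  proof
    assume "(of_nat n - 2* of_nat m - 2 :: complex) = 0"
    hence "(of_nat n :: complex) = of_nat (2*m + 2)" by (simp add: algebra_simps)
    hence "n = 2*m + 2" using of_nat_eq_iff by blast
    with assms show False by simp
  qed
  have n3: "(of_nat n - 2* of_nat m - 1 :: complex) \<noteq> 0"
  proof
    assume "(of_nat n - 2* of_nat m - 1 :: complex) = 0"
    hence "(of_nat n :: complex) = of_nat (2*m + 1)" by (simp add: algebra_simps)
    hence "n = 2*m + 1" using of_nat_eq_iff by blast
    with assms show False by simp
  qed
  have n4: "(2 * of_nat m + 1 :: complex) \<noteq> 0"
  proof
    assume "(2 * of_nat m + 1 :: complex) = 0"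
    hence "(of_nat (2*m+1) :: complex) = 0" by (simp add: add.commute)
    thus False by (simp only: of_nat_eq_0_iff)
  qed
  have n5: "(of_nat m + 1 :: complex) \<noteq> 0"
  proof
    assume "(of_nat m + 1 :: complex) = 0"
    hence "(of_nat (m+1) :: complex) = 0" by (simp add: add.commute)
    thus False by (simp only: of_nat_eq_0_iff)
  qed
  have P: "P = - (of_nat m + 1) * Q / (of_nat n - of_nat m - 1)"
    using e1 n1 by (metis nonzero_mult_div_cancel_right)
  have nz: "(of_nat n - 2 * of_nat m - 2) * (of_nat n - 2 * of_nat m - 1) \<noteq> (0::complex)" using n2 n3 by simp
  have U: "U = (- 2 * of_nat m - 2) * (- 2 * of_nat m - 1) * V / ((of_nat n - 2 * of_nat m - 2) * (of_nat n - 2 * of_nat m - 1))"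
    using e2 nz by (metis nonzero_mult_div_cancel_right)
  have "AA (Suc m) n = P / U" unfolding AA_def P_def U_def ..
  also have "\<dots> = (Q / V) * ((- (of_nat m + 1) * ((of_nat n - 2* of_nat m - 2) * (of_nat n - 2* of_nat m - 1))) /
        ((of_nat n - of_nat m - 1) * ((- 2* of_nat m - 2) * (- 2* of_nat m - 1))))"
    unfolding P U by (simp add: divide_simps)
  also have "Q / V = AA m n" unfolding AA_def Q_def V_def ..
  also have "(- (of_nat m + 1) * ((of_nat n - 2* of_nat m - 2) * (of_nat n - 2* of_nat m - 1))) /
        ((of_nat n - of_nat m - 1) * ((- 2* of_nat m - 2) * (- 2* of_nat m - 1)))
      = ((2* of_nat m+2-of_nat n)*(2* of_nat m+1-of_nat n)/(2*(of_nat m+1-of_nat n)*(2* of_nat m+1)) :: complex)"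
    using n5 by (rule rat_aux)
  finally show ?thesis .
qed

definition FF :: "complex \<Rightarrow> complex \<Rightarrow> nat \<Rightarrow> nat \<Rightarrow> complex" where
  "FF a b m n = AA m n * XX a b n"

definition GG :: "complex \<Rightarrow> complex \<Rightarrow> nat \<Rightarrow> nat \<Rightarrow> complex" where
  "GG a b m k = - FF a b (Suc m) k * (of_nat k * (of_nat k + (1 + a + b) / 2 - 1))
      / ((of_nat m + (1 + a + b) / 2) * (2 * of_nat m + 2 - of_nat k))"

lemma nz_nat: "A \<noteq> B \<Longrightarrow> (of_nat A :: complex) - of_nat B \<noteq> 0"
  by simp

lemma nz_c: "(c::complex) \<notin> \<int>\<^sub>\<le>\<^sub>0 \<Longrightarrow> c + of_nat k \<noteq> 0"
proof
  assume "c \<notin> \<int>\<^sub>\<le>\<^sub>0" "c + of_nat k = 0"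
  hence "c = - of_nat k" by (simp add: eq_neg_iff_add_eq_0)
  thus False using \<open>c \<notin> \<int>\<^sub>\<le>\<^sub>0\<close> by simp
qed

lemma wz_step:
  fixes a b :: complex
  defines "c \<equiv> (1 + a + b) / 2"
  assumes c: "c \<notin> \<int>\<^sub>\<le>\<^sub>0" and nm: "n \<le> m"
  shows "FF a b (Suc m) n - ((1+a)/2+ of_nat m)*((1+b)/2+ of_nat m)/((1/2+ of_nat m)*(c+ of_nat m)) * FF a b m n
         = GG a b m (Suc n) - GG a b m n"
proof -
  define M :: complex where "M = of_nat m"
  define N :: complex where "N = of_nat n"
  define K where "K = AA m n * XX a b n"
  define \<rho> where "\<rho> = (2*M+2-N)*(2*M+1-N)/(2*(M+1-N)*(2*M+1))"
  define t1 where "t1 = (N - M - 1) / (N - 2 * M - 2)"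
  define t2 where "t2 = (a + N) * (b + N) / ((c + N) * (N + 1))"
  have f2: "FF a b (Suc m) n = K * \<rho>"
    unfolding FF_def K_def \<rho>_def M_def N_def AA_Suc_m[OF nm] by simp
  have f1: "FF a b (Suc m) (Suc n) = K * \<rho> * t1 * t2"
  proof -
    have "FF a b (Suc m) (Suc n) = AA (Suc m) n * t1 * (XX a b n * t2)"
      unfolding FF_def AA_Suc_n XX_Suc t1_def t2_def M_def N_def c_def by simp
    also have "\<dots> = K * \<rho> * t1 * t2"
      unfolding K_def \<rho>_def M_def N_def AA_Suc_m[OF nm] by (simp add: algebra_simps)
    finally show ?thesis .
  qed
  have f3: "FF a b m n = K" unfolding FF_def K_def ..
  have h1: "M + 1 - N \<noteq> 0" using nz_nat[of "m+1" n] nm unfolding M_def N_def by (simp add: add.commute)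
  have h2: "2*M+1 \<noteq> 0" using nz_nat[of "2*m+1" 0] unfolding M_def by (simp add: add.commute)
  have h3: "N - 2*M - 2 \<noteq> 0" using nz_nat[of n "2*m+2"] nm unfolding M_def N_def by (simp add: algebra_simps)
  have h4: "c + N \<noteq> 0" using nz_c[OF c] unfolding N_def by simp
  have h5: "N + 1 \<noteq> 0" using nz_nat[of "n+1" 0] unfolding N_def by (simp add: add.commute)
  have h6: "M + c \<noteq> 0" using nz_c[OF c, of m] unfolding M_def by (simp add: add.commute)
  have h7: "2*M+1-N \<noteq> 0" using nz_nat[of "2*m+1" n] nm unfolding M_def N_def by (simp add: add_ac)
  have h8: "2*M+2-N \<noteq> 0" using nz_nat[of "2*m+2" n] nm unfolding M_def N_def by (simp add: add_ac)
  note W = wz_rat[OF h1 h2 h3 h4[unfolded c_def] h5 h6[unfolded c_def] h7 h8, of K]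
  have sN: "(of_nat (Suc n)::complex) = of_nat n + 1" by simp
  show ?thesis
    using W unfolding GG_def f1 f2 f3 sN c_def \<rho>_def t1_def t2_def M_def N_def .
qed

definition RR :: "complex \<Rightarrow> complex \<Rightarrow> nat \<Rightarrow> complex" where
  "RR a b m = pochhammer ((1 + a) / 2) m * pochhammer ((1 + b) / 2) m
      / (pochhammer (1 / 2) m * pochhammer ((1 + a + b) / 2) m)"

lemma sum_FF:
  fixes a b :: complex
  assumes c: "(1 + a + b) / 2 \<notin> \<int>\<^sub>\<le>\<^sub>0"
  shows "(\<Sum>n=0..m. FF a b m n) = RR a b m"
proof (induction m)
  case 0
  show ?case by (simp add: FF_def AA_def XX_def RR_def)
next
  case (Suc m)
  define r where "r = ((1+a)/2+ of_nat m)*((1+b)/2+ of_nat m)/((1/2+ of_nat m)*((1 + a + b) / 2+ of_nat m))"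
  have step: "FF a b (Suc m) n = r * FF a b m n + (GG a b m (Suc n) - GG a b m n)" if "n \<le> m" for n
    using wz_step[OF c that] unfolding r_def by (simp add: algebra_simps)
  have "(\<Sum>n=0..Suc m. FF a b (Suc m) n) = (\<Sum>n=0..m. FF a b (Suc m) n) + FF a b (Suc m) (Suc m)"
    by simp
  also have "(\<Sum>n=0..m. FF a b (Suc m) n) = (\<Sum>n=0..m. r * FF a b m n + (GG a b m (Suc n) - GG a b m n))"
    by (rule sum.cong) (auto intro: step)
  also have "\<dots> = r * (\<Sum>n=0..m. FF a b m n) + (GG a b m (Suc m) - GG a b m 0)"
    by (simp add: sum.distrib sum_distrib_left sum_Suc_diff)
  also have "GG a b m 0 = 0" by (simp add: GG_def)
  also have "GG a b m (Suc m) = - FF a b (Suc m) (Suc m)"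
  proof -
    have nz1: "(of_nat m + (1 + a + b) / 2 :: complex) \<noteq> 0" using nz_c[OF c, of m] by (simp add: add.commute)
    have nz2: "(of_nat m + 1 :: complex) \<noteq> 0" using nz_nat[of "m+1" 0] by (simp add: add.commute)
    have "GG a b m (Suc m) = - FF a b (Suc m) (Suc m) * ((of_nat m + 1) * (of_nat m + (1 + a + b) / 2))
        / ((of_nat m + (1 + a + b) / 2) * (of_nat m + 1))"
      unfolding GG_def by (simp add: algebra_simps)
    also have "\<dots> = - FF a b (Suc m) (Suc m)" using nz1 nz2 by simp
    finally show ?thesis .
  qed
  also note Suc.IH
  finally have "(\<Sum>n=0..Suc m. FF a b (Suc m) n) = r * RR a b m" by simp
  also have "r * RR a b m = RR a b (Suc m)"
    unfolding RR_def r_def pochhammer_rec' times_divide_times_eq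
    by (rule arg_cong2[where f="(/)"]) (simp_all only: mult_ac)
  finally show ?case .
qed



definition phi :: "complex \<Rightarrow> complex \<Rightarrow> real \<Rightarrow> complex" where
  "phi s \<mu> t = of_real t powr (s - 1) * exp (- \<mu> * of_real t)"

lemma norm_phi: "t > 0 \<Longrightarrow> norm (phi s \<mu> t) = t powr (Re s - 1) * exp (- Re \<mu> * t)"
  unfolding phi_def by (simp add: norm_mult norm_powr_real_powr)

lemma exp_ofr: "exp (- (complex_of_real a * of_real t)) = inverse (of_real (exp (a*t)))"
  by (metis exp_minus exp_of_real of_real_mult)

lemma lebesgue_gt0: "{(0::real)<..} \<in> sets lebesgue"
  by (metis borel_open open_greaterThan sets_completionI_sets sets_lborel)

lemma phi_real: "t > 0 \<Longrightarrow> phi s (of_real a) t = of_real t powr (s - 1) / of_real (exp (a * t))"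
  unfolding phi_def by (simp add: exp_ofr divide_inverse)

lemma continuous_on_phi: "continuous_on {0<..} (phi s \<mu>)"
  unfolding phi_def by (auto intro!: continuous_intros)

lemma phi_abs_integrable:
  assumes "Re s > 0" "Re \<mu> > 0"
  shows "phi s \<mu> absolutely_integrable_on {0<..}"
proof -
  have G: "(\<lambda>t. complex_of_real t powr (s - 1) / of_real (exp (Re \<mu> * t))) absolutely_integrable_on {0<..}"
    using absolutely_integrable_Gamma_integral[OF assms] .
  hence Gn: "(\<lambda>t. norm (complex_of_real t powr (s - 1) / of_real (exp (Re \<mu> * t)))) integrable_on {0<..}"
    by (simp add: absolutely_integrable_on_def)
  show ?thesis
  proof (rule measurable_bounded_by_integrable_imp_absolutely_integrable[OF _ _ Gn])
    show "phi s \<mu> \<in> borel_measurable (lebesgue_on {0<..})"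
      by (rule continuous_imp_measurable_on_sets_lebesgue[OF continuous_on_phi lebesgue_gt0])
    show "{(0::real)<..} \<in> sets lebesgue" by (rule lebesgue_gt0)
    fix t :: real assume "t \<in> {0<..}"
    hence t: "t > 0" by simp
    show "norm (phi s \<mu> t) \<le> norm (complex_of_real t powr (s - 1) / of_real (exp (Re \<mu> * t)))"
      using t by (simp add: norm_phi norm_divide norm_powr_real_powr exp_minus field_simps)
  qed
qed

lemma phi_real_has_integral:
  assumes s: "Re s > 0" and a: "a > 0"
  shows "(phi s (of_real a) has_integral (Gamma s / of_real a powr s)) {0<..}"
proof -
  define f where "f = (\<lambda>u::real. complex_of_real u powr (s - 1) / of_real (exp u))"
  have img: "(\<lambda>x. a * x) ` {0<..} = {(0::real)<..}"
  proof -
    have "y \<in> (\<lambda>x. a * x) ` {0<..}" if "y > 0" for y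
      using that a by (intro image_eqI[of _ _ "y/a"]) auto
    thus ?thesis using a by (auto simp: zero_less_mult_iff)
  qed
  have "f absolutely_integrable_on (\<lambda>x. a * x) ` {0<..} \<and> integral ((\<lambda>x. a * x) ` {0<..}) f = Gamma s"
    unfolding img f_def
    using absolutely_integrable_Gamma_integral'[OF s] Gamma_integral_complex'[OF s]
    by (auto simp: integral_unique)
  hence "(\<lambda>x. \<bar>a\<bar> *\<^sub>R f (a * x)) absolutely_integrable_on {0<..} \<and> integral {0<..} (\<lambda>x. \<bar>a\<bar> *\<^sub>R f (a * x)) = Gamma s"
    using a by (subst has_absolute_integral_change_of_variables_real[where h = "\<lambda>_. a"])
       (auto intro!: derivative_eq_intros inj_onI)
  hence "((\<lambda>x. \<bar>a\<bar> *\<^sub>R f (a * x)) has_integral Gamma s) {0<..}"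
    using set_lebesgue_integral_eq_integral(1) has_integral_integral
    by (metis absolutely_integrable_on_def)
  moreover have "\<bar>a\<bar> *\<^sub>R f (a * x) = of_real a powr s * phi s (of_real a) x" if "x \<in> {0<..}" for x
  proof -
    have x: "x > 0" using that by simp
    have "of_real (a * x) powr (s - 1) = of_real a powr (s - 1) * (of_real x powr (s - 1) :: complex)"
      using a x by (simp add: powr_times_real)
    moreover have "of_real a * of_real a powr (s - 1) = (of_real a powr s :: complex)"
      using a by (simp add: powr_diff)
    ultimately show ?thesis using a x
      by (simp add: f_def phi_real scaleR_conv_of_real field_simps)
  qed
  ultimately have "((\<lambda>x. of_real a powr s * phi s (of_real a) x) has_integral Gamma s) {0<..}"
    using has_integral_cong by (metis (no_types, lifting))
  hence "((\<lambda>x. inverse (of_real a powr s) * (of_real a powr s * phi s (of_real a) x)) has_integral inverse (of_real a powr s) * Gamma s) {0<..}"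
    by (rule has_integral_mult_right)
  moreover have "(of_real a powr s :: complex) \<noteq> 0" using a by simp
  ultimately show ?thesis by (simp add: field_simps)
qed



lemma phi_deriv:
  assumes "t > 0"
  shows "((\<lambda>x. phi s x t) has_field_derivative (- of_real t * phi s x t)) (at x within U)"
  unfolding phi_def by (auto intro!: derivative_eq_intros simp: algebra_simps)

lemma fk_holo:
  assumes "0 < lo"
  shows "(\<lambda>\<mu>. integral {lo..hi} (phi s \<mu>)) holomorphic_on {\<mu>. Re \<mu> > 0}"
proof -
  have "(\<lambda>\<mu>. integral (cbox lo hi) (phi s \<mu>)) holomorphic_on {\<mu>. Re \<mu> > 0}"
  proof (rule leibniz_rule_holomorphic[where fx = "\<lambda>x t. - of_real t * phi s x t"])
    fix x t assume "t \<in> cbox lo hi"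
    hence "t > 0" using assms by auto
    thus "((\<lambda>x. phi s x t) has_field_derivative (- of_real t * phi s x t)) (at x within {\<mu>. Re \<mu> > 0})"
      by (rule phi_deriv)
  next
    fix x :: complex
    have "continuous_on (cbox lo hi) (phi s x)"
      by (rule continuous_on_subset[OF continuous_on_phi]) (use assms in auto)
    thus "phi s x integrable_on cbox lo hi" by (rule integrable_continuous)
  next
    have "continuous_on ({\<mu>. Re \<mu> > 0} \<times> cbox lo hi)
            (\<lambda>p. - of_real (snd p) * (of_real (snd p) powr (s - 1) * exp (- fst p * of_real (snd p))))"
      using assms by (auto intro!: continuous_intros)
    thus "continuous_on ({\<mu>. Re \<mu> > 0} \<times> cbox lo hi) (\<lambda>(x, t). - of_real t * phi s x t)"
      by (simp add: phi_def split_def)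
  next
    show "convex {\<mu>. Re \<mu> > 0}" by (rule convex_halfspace_Re_gt)
  qed
  thus ?thesis by simp
qed



lemma phi_integrable: "Re s > 0 \<Longrightarrow> Re \<mu> > 0 \<Longrightarrow> phi s \<mu> integrable_on {0<..}"
  using phi_abs_integrable absolutely_integrable_on_def by blast

lemma phi_norm_integrable: "Re s > 0 \<Longrightarrow> Re \<mu> > 0 \<Longrightarrow> (\<lambda>t. norm (phi s \<mu> t)) integrable_on {0<..}"
  using phi_abs_integrable absolutely_integrable_on_def by blast

lemma phi_int_interval: "0 < lo \<Longrightarrow> phi s \<mu> integrable_on {lo..hi}"
  by (rule integrable_continuous_interval, rule continuous_on_subset[OF continuous_on_phi]) auto

lemma phi_norm_int_interval: "0 < lo \<Longrightarrow> (\<lambda>t. norm (phi s \<mu> t)) integrable_on {lo..hi}"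
  by (rule integrable_continuous_interval, rule continuous_on_norm, rule continuous_on_subset[OF continuous_on_phi]) auto

lemma phi_norm_le:
  assumes "t > 0" "Re \<mu> \<ge> a"
  shows "norm (phi s \<mu> t) \<le> norm (phi s (of_real a) t)"
  using assms by (simp add: norm_phi mult_left_mono)

lemma restrict_split:
  fixes f :: "real \<Rightarrow> 'b::euclidean_space"
  assumes "f integrable_on {0<..}" "f integrable_on {lo..hi}" "0 < lo"
  shows "integral {0<..} f - integral {lo..hi} f = integral {0<..} (\<lambda>t. if t \<in> {lo..hi} then 0 else f t)"
    and "(\<lambda>t. if t \<in> {lo..hi} then 0 else f t) integrable_on {0<..}"
proof -
  have sub: "{lo..hi} \<inter> {0<..} = {lo..hi}" using assms(3) by auto
  have r1: "integral {lo..hi} f = integral {0<..} (\<lambda>t. if t \<in> {lo..hi} then f t else 0)"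
    using integral_restrict_Int[of "{0<..}" "{lo..hi}" f] sub by simp
  have r2: "(\<lambda>t. if t \<in> {lo..hi} then f t else 0) integrable_on {0<..}"
    using integrable_restrict_Int[of "{lo..hi}" f "{0<..}"] sub assms(2) by simp
  have eq: "(\<lambda>t. if t \<in> {lo..hi} then 0 else f t) = (\<lambda>t. f t - (if t \<in> {lo..hi} then f t else 0))"
    by auto
  show "integral {0<..} f - integral {lo..hi} f = integral {0<..} (\<lambda>t. if t \<in> {lo..hi} then 0 else f t)"
    unfolding r1 eq by (rule integral_diff[OF assms(1) r2, symmetric])
  show "(\<lambda>t. if t \<in> {lo..hi} then 0 else f t) integrable_on {0<..}"
    unfolding eq by (rule integrable_diff[OF assms(1) r2])
qed

lemma tail_bound:
  assumes s: "Re s > 0" and a: "a > 0" and mu: "Re \<mu> \<ge> a" and lo: "0 < lo"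
  shows "norm (integral {0<..} (phi s \<mu>) - integral {lo..hi} (phi s \<mu>))
     \<le> integral {0<..} (\<lambda>t. norm (phi s (of_real a) t)) - integral {lo..hi} (\<lambda>t. norm (phi s (of_real a) t))"
proof -
  have mu0: "Re \<mu> > 0" using a mu by simp
  note A = restrict_split[OF phi_integrable[OF s mu0] phi_int_interval[OF lo] lo]
  have a0: "Re (complex_of_real a) > 0" using a by simp
  note B = restrict_split[OF phi_norm_integrable[OF s a0] phi_norm_int_interval[OF lo] lo]
  show ?thesis unfolding A(1) B(1) using s a
    by (intro integral_norm_bound_integral A(2) B(2)) (auto intro: phi_norm_le[OF _ mu])
qed

lemma tail_lim:
  fixes h :: "real \<Rightarrow> real"
  assumes h: "h integrable_on {0<..}" and hc: "continuous_on {0<..} h" and hnn: "\<And>t. t > 0 \<Longrightarrow> h t \<ge> 0"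
  shows "(\<lambda>k. integral {1 / real (Suc k)..real (Suc k)} h) \<longlonglongrightarrow> integral {0<..} h"
proof -
  define I where "I = (\<lambda>k::nat. {1 / real (Suc k)..real (Suc k)})"
  have sub: "I k \<inter> {0<..} = I k" for k by (auto simp: I_def intro: less_le_trans[of 0 "1 / real (Suc k)"])
  have intI: "h integrable_on I k" for k
    unfolding I_def by (rule integrable_continuous_interval, rule continuous_on_subset[OF hc])
       (auto intro: less_le_trans[of 0 "1 / real (Suc k)"])
  have eqI: "integral (I k) h = integral {0<..} (\<lambda>t. if t \<in> I k then h t else 0)" for k
    using integral_restrict_Int[of "{0<..}" "I k" h] sub[of k] by simp
  have "(\<lambda>k. integral {0<..} (\<lambda>t. if t \<in> I k then h t else 0)) \<longlonglongrightarrow> integral {0<..} h"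
  proof (rule dominated_convergence(2)[where h = h])
    show "(\<lambda>t. if t \<in> I k then h t else 0) integrable_on {0<..}" for k
      using integrable_restrict_Int[of "I k" h "{0<..}"] sub[of k] intI[of k] by simp
    show "h integrable_on {0<..}" by (rule h)
    show "norm (if t \<in> I k then h t else 0) \<le> h t" if "t \<in> {0<..}" for k t using hnn[of t] that by auto
    fix t :: real assume "t \<in> {0<..}"
    hence t: "t > 0" by simp
    obtain N :: nat where N: "real N \<ge> max t (1/t)" using real_arch_simple by blast
    have "eventually (\<lambda>k. (if t \<in> I k then h t else 0) = h t) sequentially"
    proof (rule eventually_sequentiallyI[of N])
      fix k assume "N \<le> k"
      hence k: "real (Suc k) \<ge> max t (1/t)" using N by linarith
      hence "t \<le> real (Suc k)" by simp
      moreover have "1 / real (Suc k) \<le> t"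
        using k t by (simp add: field_simps)
      ultimately show "(if t \<in> I k then h t else 0) = h t" by (simp add: I_def)
    qed
    thus "(\<lambda>k. if t \<in> I k then h t else 0) \<longlonglongrightarrow> h t" by (rule tendsto_eventually)
  qed
  moreover have "(\<lambda>k. integral (I k) h) = (\<lambda>k. integral {0<..} (\<lambda>t. if t \<in> I k then h t else 0))"
    using eqI by auto
  ultimately show ?thesis unfolding I_def by simp
qed



lemma Phi_holo:
  assumes s: "Re s > 0"
  shows "(\<lambda>\<mu>. integral {0<..} (phi s \<mu>)) holomorphic_on {\<mu>. Re \<mu> > 0}"
proof (rule holomorphic_uniform_sequence[where f = "\<lambda>k \<mu>. integral {1 / real (Suc k)..real (Suc k)} (phi s \<mu>)"])
  show "open {\<mu>. Re \<mu> > 0}" by (rule open_halfspace_Re_gt)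
  show "(\<lambda>\<mu>. integral {1 / real (Suc k)..real (Suc k)} (phi s \<mu>)) holomorphic_on {\<mu>. Re \<mu> > 0}" for k
    by (rule fk_holo) simp
  fix x :: complex assume "x \<in> {\<mu>. Re \<mu> > 0}"
  hence x: "Re x > 0" by simp
  define a where "a = Re x / 2"
  have a: "a > 0" using x by (simp add: a_def)
  have ball: "Re \<mu> \<ge> a" if "\<mu> \<in> cball x a" for \<mu>
  proof -
    have "\<bar>Re (x - \<mu>)\<bar> \<le> cmod (x - \<mu>)" by (rule abs_Re_le_cmod)
    also have "\<dots> \<le> a" using that by (simp add: dist_norm)
    finally have "Re x - Re \<mu> \<le> a" using abs_le_D1 by simp
    thus ?thesis unfolding a_def by linarith
  qed
  define h where "h = (\<lambda>t. norm (phi s (of_real a) t))"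
  have a0: "Re (complex_of_real a) > 0" using a by simp
  have lim: "(\<lambda>k. integral {1 / real (Suc k)..real (Suc k)} h) \<longlonglongrightarrow> integral {0<..} h"
    unfolding h_def
    by (rule tail_lim[OF phi_norm_integrable[OF s a0]])
       (auto intro!: continuous_on_norm continuous_on_phi)
  hence "(\<lambda>k. integral {0<..} h - integral {1 / real (Suc k)..real (Suc k)} h) \<longlonglongrightarrow> integral {0<..} h - integral {0<..} h"
    by (intro tendsto_intros)
  hence lim0: "(\<lambda>k. integral {0<..} h - integral {1 / real (Suc k)..real (Suc k)} h) \<longlonglongrightarrow> 0"
    by simp
  have "uniform_limit (cball x a) (\<lambda>k \<mu>. integral {1 / real (Suc k)..real (Suc k)} (phi s \<mu>))
          (\<lambda>\<mu>. integral {0<..} (phi s \<mu>)) sequentially"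
  proof (rule uniform_limitI)
    fix e :: real assume e: "e > 0"
    from order_tendstoD(2)[OF lim0 e]
    have ev: "eventually (\<lambda>k. integral {0<..} h - integral {1 / real (Suc k)..real (Suc k)} h < e) sequentially" .
    show "eventually (\<lambda>k. \<forall>\<mu>\<in>cball x a. dist (integral {1 / real (Suc k)..real (Suc k)} (phi s \<mu>))
             (integral {0<..} (phi s \<mu>)) < e) sequentially"
    proof (rule eventually_mono[OF ev], safe)
      fix k \<mu> assume lt: "integral {0<..} h - integral {1 / real (Suc k)..real (Suc k)} h < e"
        and mu: "\<mu> \<in> cball x a"
      have "dist (integral {1 / real (Suc k)..real (Suc k)} (phi s \<mu>)) (integral {0<..} (phi s \<mu>))
          = norm (integral {0<..} (phi s \<mu>) - integral {1 / real (Suc k)..real (Suc k)} (phi s \<mu>))"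
        by (simp add: dist_norm norm_minus_commute)
      also have "\<dots> \<le> integral {0<..} h - integral {1 / real (Suc k)..real (Suc k)} h"
        unfolding h_def by (rule tail_bound[OF s a ball[OF mu]]) simp
      finally show "dist (integral {1 / real (Suc k)..real (Suc k)} (phi s \<mu>)) (integral {0<..} (phi s \<mu>)) < e"
        using lt by linarith
    qed
  qed
  moreover have "cball x a \<subseteq> {\<mu>. Re \<mu> > 0}" using ball a by fastforce
  ultimately show "\<exists>d>0. cball x d \<subseteq> {\<mu>. Re \<mu> > 0} \<and>
      uniform_limit (cball x d) (\<lambda>k \<mu>. integral {1 / real (Suc k)..real (Suc k)} (phi s \<mu>))
          (\<lambda>\<mu>. integral {0<..} (phi s \<mu>)) sequentially"
    using a by blast
qed

lemma euler_integral_complex: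
  assumes s: "Re s > 0" and mu: "Re \<mu> > 0"
  shows "(phi s \<mu> has_integral (Gamma s / \<mu> powr s)) {0<..}"
proof -
  define H where "H = {\<mu>::complex. Re \<mu> > 0}"
  define U where "U = complex_of_real ` {0<..}"
  have "integral {0<..} (phi s z) - Gamma s / z powr s = 0" if "z \<in> H" for z
  proof (rule analytic_continuation[where f = "\<lambda>z. integral {0<..} (phi s z) - Gamma s / z powr s" and S = H and U = U and \<xi> = 1])
    show "(\<lambda>z. integral {0<..} (phi s z) - Gamma s / z powr s) holomorphic_on H"
      unfolding H_def
      by (intro holomorphic_intros Phi_holo[OF s])
         (auto simp: complex_nonpos_Reals_iff)
    show "open H" unfolding H_def by (rule open_halfspace_Re_gt)
    show "connected H" unfolding H_def by (rule convex_connected, rule convex_halfspace_Re_gt)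
    show "U \<subseteq> H" unfolding U_def H_def by auto
    show "1 \<in> H" unfolding H_def by simp
    show "z \<in> H" by (rule that)
    show "1 islimpt U"
      unfolding islimpt_approachable
    proof safe
      fix e :: real assume e: "e > 0"
      show "\<exists>x'\<in>U. x' \<noteq> 1 \<and> dist x' 1 < e"
      proof (rule bexI[of _ "of_real (1 + e/2)"])
        show "complex_of_real (1 + e/2) \<in> U" unfolding U_def by (rule imageI) (use e in simp)
        show "complex_of_real (1 + e / 2) \<noteq> 1 \<and> dist (complex_of_real (1 + e / 2)) 1 < e"
          using e by (simp add: dist_norm)
      qed
    qed
    fix w assume "w \<in> U"
    then obtain a where a: "a > 0" "w = of_real a" unfolding U_def by auto
    show "integral {0<..} (phi s w) - Gamma s / w powr s = 0"
      using integral_unique[OF phi_real_has_integral[OF s a(1)]] a(2) by simp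
  qed
  hence "integral {0<..} (phi s \<mu>) = Gamma s / \<mu> powr s" using mu unfolding H_def by simp
  moreover have "phi s \<mu> integrable_on {0<..}" by (rule phi_integrable[OF s mu])
  ultimately show ?thesis using has_integral_integral by metis
qed


lemma poch_m2_nz:
  assumes "n \<le> m" shows "pochhammer (- 2 * of_nat m :: complex) n \<noteq> 0"
proof
  assume "pochhammer (- 2 * of_nat m :: complex) n = 0"
  then obtain k where k: "k < n" "(- 2 * of_nat m :: complex) = - of_nat k"
    by (auto simp: pochhammer_eq_0_iff)
  hence "(of_nat (2 * m) :: complex) = of_nat k" by simp
  hence "2 * m = k" using of_nat_eq_iff by blast
  with k assms show False by simp
qed

lemma poch_c_nz:
  assumes "(c::complex) \<notin> \<int>\<^sub>\<le>\<^sub>0" shows "pochhammer c n \<noteq> 0"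
proof
  assume "pochhammer c n = 0"
  then obtain k where "c = - of_nat k" by (auto simp: pochhammer_eq_0_iff)
  with assms show False by simp
qed

theorem mainTheorem16:
  fixes m :: nat and \<alpha> \<beta> \<mu> :: complex
  assumes "m \<ge> 1"
    and "\<alpha> \<notin> \<int>\<^sub>\<le>\<^sub>0"
    and "(1 + \<alpha> + \<beta>) / 2 \<notin> \<int>\<^sub>\<le>\<^sub>0"
    and "Re \<beta> > 0" and "Re \<mu> > 0"
  shows "((\<lambda>t::real. of_real t powr (\<beta> - 1) * exp (- \<mu> * of_real t)
            * hyp2F2_trunc (- of_nat m) \<alpha> (- 2 * of_nat m) ((1 + \<alpha> + \<beta>) / 2) m (\<mu> * of_real t))
          has_integral
          (Gamma \<beta> / \<mu> powr \<beta>
            * (pochhammer ((1 + \<alpha>) / 2) m * pochhammer ((1 + \<beta>) / 2) m)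
            / (pochhammer (1 / 2) m * pochhammer ((1 + \<alpha> + \<beta>) / 2) m))) {0<..}"
proof -
  define c where "c = (1 + \<alpha> + \<beta>) / 2"
  have c: "c \<notin> \<int>\<^sub>\<le>\<^sub>0" using assms(3) by (simp add: c_def)
  define K where "K = (\<lambda>n. (pochhammer (- of_nat m) n * pochhammer \<alpha> n) /
      (pochhammer (- 2 * of_nat m) n * pochhammer c n) * \<mu> ^ n / of_nat (fact n))"
  have mu0: "\<mu> \<noteq> 0" using assms(5) by auto
  have ptw: "of_real t powr (\<beta> - 1) * exp (- \<mu> * of_real t)
        * hyp2F2_trunc (- of_nat m) \<alpha> (- 2 * of_nat m) c m (\<mu> * of_real t)
      = (\<Sum>n=0..m. K n * phi (\<beta> + of_nat n) \<mu> t)" if "t \<in> {0<..}" for t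
  proof -
    have t: "t > 0" using that by simp
    have ph: "phi (\<beta> + of_nat n) \<mu> t = of_real t powr (\<beta> - 1) * exp (- \<mu> * of_real t) * of_real t ^ n" for n
    proof -
      have "complex_of_real t powr (\<beta> + of_nat n - 1) = of_real t powr ((\<beta> - 1) + of_nat n)"
        by (simp add: algebra_simps)
      also have "\<dots> = of_real t powr (\<beta> - 1) * of_real t ^ n"
        using t by (simp add: powr_add powr_nat')
      finally show ?thesis unfolding phi_def by (simp add: mult_ac)
    qed
    show ?thesis
      unfolding hyp2F2_trunc_def sum_distrib_left ph K_def
      by (rule sum.cong) (simp_all add: power_mult_distrib mult_ac)
  qed
  have each: "((\<lambda>t. K n * phi (\<beta> + of_nat n) \<mu> t) has_integral
      K n * (Gamma (\<beta> + of_nat n) / \<mu> powr (\<beta> + of_nat n))) {0<..}" for n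
    by (rule has_integral_mult_right, rule euler_integral_complex) (use assms in simp_all)
  have I1: "((\<lambda>t. \<Sum>n=0..m. K n * phi (\<beta> + of_nat n) \<mu> t) has_integral
      (\<Sum>n=0..m. K n * (Gamma (\<beta> + of_nat n) / \<mu> powr (\<beta> + of_nat n)))) {0<..}"
    by (rule has_integral_sum[OF finite_atLeastAtMost]) (rule each)
  have E1: "(\<Sum>n=0..m. K n * (Gamma (\<beta> + of_nat n) / \<mu> powr (\<beta> + of_nat n)))
      = (\<Sum>n=0..m. Gamma \<beta> / \<mu> powr \<beta> * FF \<alpha> \<beta> m n)"
  proof (rule sum.cong)
    fix n assume "n \<in> {0..m}"
    hence nm: "n \<le> m" by simp
    have bnp: "\<beta> \<notin> \<int>\<^sub>\<le>\<^sub>0" using assms(4) by (auto elim!: nonpos_Ints_cases)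
    have G0: "Gamma \<beta> \<noteq> 0" using bnp by (simp add: Gamma_eq_zero_iff)
    have G: "Gamma (\<beta> + of_nat n) = pochhammer \<beta> n * Gamma \<beta>"
      using pochhammer_Gamma[OF bnp, of n] G0 by (simp add: field_simps)
    have P: "\<mu> powr (\<beta> + of_nat n) = \<mu> powr \<beta> * \<mu> ^ n"
      using mu0 by (simp add: powr_add powr_nat')
    have nz1: "pochhammer (- 2 * of_nat m :: complex) n \<noteq> 0" by (rule poch_m2_nz[OF nm])
    have nz2: "pochhammer c n \<noteq> 0" by (rule poch_c_nz[OF c])
    have nz3: "\<mu> powr \<beta> \<noteq> 0" using mu0 by simp
    have nz4: "\<mu> ^ n \<noteq> 0" using mu0 by simp
    show "K n * (Gamma (\<beta> + of_nat n) / \<mu> powr (\<beta> + of_nat n)) = Gamma \<beta> / \<mu> powr \<beta> * FF \<alpha> \<beta> m n"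
      unfolding G P K_def FF_def AA_def XX_def c_def[symmetric]
      using nz1 nz2 nz3 nz4 G0 by (simp add: field_simps)
  qed simp
  have E2: "(\<Sum>n=0..m. Gamma \<beta> / \<mu> powr \<beta> * FF \<alpha> \<beta> m n) = Gamma \<beta> / \<mu> powr \<beta> * RR \<alpha> \<beta> m"
    by (subst sum_distrib_left[symmetric]) (simp only: sum_FF[OF assms(3)])
  have I2: "((\<lambda>t. \<Sum>n=0..m. K n * phi (\<beta> + of_nat n) \<mu> t) has_integral
      Gamma \<beta> / \<mu> powr \<beta> * RR \<alpha> \<beta> m) {0<..}"
    using I1 unfolding E1 E2 .
  have cong: "((\<lambda>t::real. of_real t powr (\<beta> - 1) * exp (- \<mu> * of_real t)
            * hyp2F2_trunc (- of_nat m) \<alpha> (- 2 * of_nat m) c m (\<mu> * of_real t))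
          has_integral Gamma \<beta> / \<mu> powr \<beta> * RR \<alpha> \<beta> m) {0<..} \<longleftrightarrow>
      ((\<lambda>t. \<Sum>n=0..m. K n * phi (\<beta> + of_nat n) \<mu> t) has_integral
      Gamma \<beta> / \<mu> powr \<beta> * RR \<alpha> \<beta> m) {0<..}"
    by (rule has_integral_cong) (rule ptw)
  have I3: "((\<lambda>t::real. of_real t powr (\<beta> - 1) * exp (- \<mu> * of_real t)
            * hyp2F2_trunc (- of_nat m) \<alpha> (- 2 * of_nat m) c m (\<mu> * of_real t))
          has_integral Gamma \<beta> / \<mu> powr \<beta> * RR \<alpha> \<beta> m) {0<..}"
    using cong I2 by blast
  show ?thesis using I3 unfolding c_def RR_def times_divide_eq_right .
qed

end
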